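(* Let $\sigma : X^* \to M$ be a finite monoid choice of generators for a monoid $M$. Then $M$ is finite if and only if the loop problem $L_\sigma(M)$ is a regular language. Likewise, if $\sigma : X^+ \to S$ is a finite semigroup choice of generators for a semigroup $S$, then $S$ is finite if and only if $L_\sigma(S)$ is regular.
   Context: Maps are written on the right ($u\sigma$ is the image of $u$ under $\sigma$). For an alphabet $X$, $X^*$ denotes the free monoid on $X$ and $X^+$ the free semigroup on $X$. A (monoid) choice of generators for a monoid $M$ is a surjective monoid morphism $\sigma : X^* \to M$; it is finite if $X$ is finite. Let $\overline{X} = \{\overline{x} : x \in X\}$ be a set of new symbols and $\hat{X} = X \cup \overline{X}$. The loop automaton of $M$ with respect to $\sigma$ is the directed edge-labelled graph with vertex set $M$ having, for every $a \in M$ and $x \in X$, an edge from $a$ to $a(x\sigma)$ labelled $x$ and an edge from $a(x\sigma)$ to $a$ labelled $\overline{x}$; labels of paths are concatenations of edge labels. The loop problem $L_\sigma(M) \subseteq \hat{X}^*$ is the set of labels of paths from the identity of $M$ to itself. For a semigroup $S$, a (semigroup) choice of generators is a surjective morphism $\sigma : X^+ \to S$; let $S^1$ be $S$ with a new identity adjoined (even if $S$ already has one) and $\sigma^1 : X^* \to S^1$ the unique extension of $\sigma$; the loop problem of $S$ is $L_\sigma(S) := L_{\sigma^1}(S^1)$. *)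

theory Defs
  imports Main
begin

text \<open>Words over an alphabet X are lists with entries in X (lists X).
  The doubled alphabet X-hat is encoded in the sum type: Inl x stands for x,
  Inr x stands for x-bar.\<close>

definition hat :: "'x set \<Rightarrow> ('x + 'x) set" where
  "hat X = Inl ` X \<union> Inr ` X"

definition monoid_choice :: "'x set \<Rightarrow> ('x list \<Rightarrow> 'm::monoid_mult) \<Rightarrow> bool" where
  "monoid_choice X \<sigma> \<longleftrightarrow> \<sigma> [] = 1
     \<and> (\<forall>u\<in>lists X. \<forall>v\<in>lists X. \<sigma> (u @ v) = \<sigma> u * \<sigma> v)
     \<and> \<sigma> ` lists X = UNIV"

text \<open>Semigroup choice of generators: a surjective semigroup morphism from X^+
  (nonempty words) onto the semigroup (the whole type 's); values on [] are irrelevant.\<close>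
definition semigroup_choice :: "'x set \<Rightarrow> ('x list \<Rightarrow> 's::semigroup_mult) \<Rightarrow> bool" where
  "semigroup_choice X \<sigma> \<longleftrightarrow>
       (\<forall>u\<in>lists X. \<forall>v\<in>lists X. u \<noteq> [] \<longrightarrow> v \<noteq> [] \<longrightarrow> \<sigma> (u @ v) = \<sigma> u * \<sigma> v)
     \<and> \<sigma> ` (lists X - {[]}) = UNIV"

definition loop_edge :: "('m \<Rightarrow> 'm \<Rightarrow> 'm) \<Rightarrow> 'x set \<Rightarrow> ('x \<Rightarrow> 'm) \<Rightarrow> 'm \<Rightarrow> 'x + 'x \<Rightarrow> 'm \<Rightarrow> bool" where
  "loop_edge mult X g a l b \<longleftrightarrow>
     (\<exists>x\<in>X. (l = Inl x \<and> b = mult a (g x)) \<or> (l = Inr x \<and> a = mult b (g x)))"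

inductive loop_path :: "('m \<Rightarrow> 'm \<Rightarrow> 'm) \<Rightarrow> 'x set \<Rightarrow> ('x \<Rightarrow> 'm) \<Rightarrow> 'm \<Rightarrow> ('x + 'x) list \<Rightarrow> 'm \<Rightarrow> bool"
  for mult X g where
  nil: "loop_path mult X g a [] a"
| cons: "loop_edge mult X g a l b \<Longrightarrow> loop_path mult X g b w c \<Longrightarrow> loop_path mult X g a (l # w) c"

definition loop_problem :: "('m \<Rightarrow> 'm \<Rightarrow> 'm) \<Rightarrow> 'm \<Rightarrow> 'x set \<Rightarrow> ('x \<Rightarrow> 'm) \<Rightarrow> ('x + 'x) list set" where
  "loop_problem mult e X g = {w. loop_path mult X g e w e}"

definition monoid_loop_problem :: "'x set \<Rightarrow> ('x list \<Rightarrow> 'm::monoid_mult) \<Rightarrow> ('x + 'x) list set" where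
  "monoid_loop_problem X \<sigma> = loop_problem (*) 1 X (\<lambda>x. \<sigma> [x])"

text \<open>S^1: adjoin a new identity None to the semigroup.\<close>
fun mult1 :: "'s::semigroup_mult option \<Rightarrow> 's option \<Rightarrow> 's option" where
  "mult1 None y = y"
| "mult1 (Some a) None = Some a"
| "mult1 (Some a) (Some b) = Some (a * b)"

definition sigma1 :: "('x list \<Rightarrow> 's) \<Rightarrow> 'x list \<Rightarrow> 's option" where
  "sigma1 \<sigma> w = (if w = [] then None else Some (\<sigma> w))"

definition semigroup_loop_problem :: "'x set \<Rightarrow> ('x list \<Rightarrow> 's::semigroup_mult) \<Rightarrow> ('x + 'x) list set" where
  "semigroup_loop_problem X \<sigma> = loop_problem mult1 None X (\<lambda>x. sigma1 \<sigma> [x])"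

definition regular_lang :: "'a set \<Rightarrow> 'a list set \<Rightarrow> bool" where
  "regular_lang A L \<longleftrightarrow> (\<exists>(Q::nat set) \<delta> q0 F. finite Q \<and> q0 \<in> Q \<and> F \<subseteq> Q
      \<and> (\<forall>q\<in>Q. \<forall>a\<in>A. \<delta> q a \<in> Q)
      \<and> L = {w \<in> lists A. foldl \<delta> q0 w \<in> F})"

end

theory Submission
  imports Defs
begin

lemma lp_nil[simp]: "loop_path mult X g a [] c \<longleftrightarrow> a = c"
  by (auto elim: loop_path.cases intro: loop_path.nil)

lemma lp_cons[simp]: "loop_path mult X g a (l # w) c \<longleftrightarrow> (\<exists>b. loop_edge mult X g a l b \<and> loop_path mult X g b w c)"
  by (auto elim: loop_path.cases intro: loop_path.cons)

lemma lp_append: "loop_path mult X g a (u @ v) c \<longleftrightarrow> (\<exists>b. loop_path mult X g a u b \<and> loop_path mult X g b v c)"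
  by (induction u arbitrary: a) auto

lemma lp_lists: "loop_path mult X g a w c \<Longrightarrow> w \<in> lists (hat X)"
  by (induction rule: loop_path.induct) (auto simp: loop_edge_def hat_def)

lemma lp_Inl: "set u \<subseteq> X \<Longrightarrow> loop_path mult X g a (map Inl u) c \<longleftrightarrow> c = foldl (\<lambda>a x. mult a (g x)) a u"
  by (induction u arbitrary: a) (auto simp: loop_edge_def)

lemma lp_Inr: "set v \<subseteq> X \<Longrightarrow> loop_path mult X g b (rev (map Inr v)) c \<longleftrightarrow> b = foldl (\<lambda>a x. mult a (g x)) c v"
proof (induction v arbitrary: b rule: rev_induct)
  case Nil then show ?case by simp
next
  case (snoc x v)
  then show ?case by (auto simp: loop_edge_def)
qed

lemma lp_key: "set u \<subseteq> X \<Longrightarrow> set v \<subseteq> X \<Longrightarrow>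
   loop_path mult X g e (map Inl u @ rev (map Inr v)) e \<longleftrightarrow>
   foldl (\<lambda>a x. mult a (g x)) e u = foldl (\<lambda>a x. mult a (g x)) e v"
  by (auto simp: lp_append lp_Inl lp_Inr)

lemma regular_intro:
  assumes fin: "finite (UNIV::'q set)"
  shows "regular_lang A {w \<in> lists A. foldl (\<delta>::'q \<Rightarrow> 'a \<Rightarrow> 'q) q0 w \<in> F}"
proof -
  obtain h where h: "bij_betw h {0..<card (UNIV::'q set)} (UNIV::'q set)"
    using ex_bij_betw_nat_finite[OF fin] by blast
  define f where "f = inv_into {0..<card (UNIV::'q set)} h"
  have f1: "h (f q) = q" for q using h unfolding f_def
    by (simp add: bij_betw_inv_into_right)
  have f2: "f q \<in> {0..<card (UNIV::'q set)}" for q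
    using bij_betw_inv_into[OF h] unfolding f_def bij_betw_def by auto
  have finj: "inj f" by (metis f1 injI)
  define d where "d n a = f (\<delta> (h n) a)" for n a
  have fold: "foldl d (f q) w = f (foldl \<delta> q w)" for q w
    by (induction w arbitrary: q) (auto simp: d_def f1)
  show ?thesis unfolding regular_lang_def
    apply (rule exI[of _ "{0..<card (UNIV::'q set)}"], rule exI[of _ d], rule exI[of _ "f q0"],
           rule exI[of _ "f ` F"])
    using f2 finj by (auto simp: d_def fold inj_image_mem_iff)
qed

lemma finite_regular:
  assumes fin: "finite (UNIV::'v set)"
  shows "regular_lang (hat X) (loop_problem mult (e::'v) X g)"
proof -
  define d where "d S l = {b. \<exists>a\<in>S. loop_edge mult X g a l b}" for S l
  have fold: "foldl d S w = {c. \<exists>a\<in>S. loop_path mult X g a w c}" for S w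
    by (induction w arbitrary: S) (auto simp: d_def)
  have "loop_problem mult e X g = {w \<in> lists (hat X). foldl d {e} w \<in> {S. e \<in> S}}"
    unfolding loop_problem_def fold by (auto dest: lp_lists)
  moreover have "finite (UNIV::'v set set)" using fin by (simp add: Finite_Set.finite_set)
  ultimately show ?thesis using regular_intro by metis
qed

lemma regular_finite:
  assumes reg: "regular_lang (hat X) (loop_problem mult (e::'v) X g)"
    and surj: "(\<lambda>u. foldl (\<lambda>a x. mult a (g x)) e u) ` lists X = UNIV"
  shows "finite (UNIV::'v set)"
proof -
  define Fo where "Fo u = foldl (\<lambda>a x. mult a (g x)) e u" for u
  obtain Q :: "nat set" and \<delta> q0 F where Q: "finite Q" "q0 \<in> Q" "F \<subseteq> Q"
    and cl: "\<forall>q\<in>Q. \<forall>a\<in>hat X. \<delta> q a \<in> Q"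
    and L: "loop_problem mult e X g = {w \<in> lists (hat X). foldl \<delta> q0 w \<in> F}"
    using reg unfolding regular_lang_def by blast
  have inQ: "q \<in> Q \<Longrightarrow> w \<in> lists (hat X) \<Longrightarrow> foldl \<delta> q w \<in> Q" for q w
    by (induction w arbitrary: q) (auto simp: cl)
  define \<phi> where "\<phi> u = foldl \<delta> q0 (map Inl u)" for u
  have lst: "u \<in> lists X \<Longrightarrow> map Inl u @ rev (map Inr v) \<in> lists (hat X) \<and> v \<in> lists X \<longrightarrow> True" for u v by simp
  have mem: "u \<in> lists X \<Longrightarrow> v \<in> lists X \<Longrightarrow>
      (map Inl u @ rev (map Inr v) \<in> loop_problem mult e X g \<longleftrightarrow> Fo u = Fo v)" for u v
    unfolding loop_problem_def Fo_def using lp_key[of u X v mult g e] by auto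
  have inj: "Fo u = Fo v" if u: "u \<in> lists X" and v: "v \<in> lists X" and eq: "\<phi> u = \<phi> v" for u v
  proof -
    have w: "map Inl u @ rev (map Inr u) \<in> lists (hat X)" "map Inl v @ rev (map Inr u) \<in> lists (hat X)"
      using u v by (auto simp: hat_def)
    have "map Inl u @ rev (map Inr u) \<in> loop_problem mult e X g" using mem[OF u u] by simp
    then have "foldl \<delta> q0 (map Inl u @ rev (map Inr u)) \<in> F" using L by auto
    then have "foldl \<delta> q0 (map Inl v @ rev (map Inr u)) \<in> F" using eq by (simp add: \<phi>_def)
    then have "map Inl v @ rev (map Inr u) \<in> loop_problem mult e X g" using L w by auto
    then show ?thesis using mem[OF v u] by simp
  qed
  define h where "h q = Fo (SOME u. u \<in> lists X \<and> \<phi> u = q)" for q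
  have "UNIV \<subseteq> h ` Q"
  proof
    fix y :: 'v
    obtain u where u: "u \<in> lists X" "Fo u = y" using surj unfolding Fo_def by (metis UNIV_I imageE)
    have "\<phi> u \<in> Q" unfolding \<phi>_def using u Q(2) by (intro inQ) (auto simp: hat_def)
    moreover have "h (\<phi> u) = y"
    proof -
      have ex: "\<exists>u'. u' \<in> lists X \<and> \<phi> u' = \<phi> u" using u by blast
      from someI_ex[OF ex] have "(SOME u'. u' \<in> lists X \<and> \<phi> u' = \<phi> u) \<in> lists X"
        "\<phi> (SOME u'. u' \<in> lists X \<and> \<phi> u' = \<phi> u) = \<phi> u" by auto
      then show ?thesis unfolding h_def using inj u by metis
    qed
    ultimately show "y \<in> h ` Q" by blast
  qed
  then show ?thesis using Q(1) finite_surj by blast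
qed

lemma monoid_fold:
  assumes "monoid_choice X \<sigma>" "u \<in> lists X"
  shows "foldl (\<lambda>a x. a * \<sigma> [x]) 1 u = \<sigma> u"
  using assms(2)
proof (induction u rule: rev_induct)
  case Nil then show ?case using assms(1) by (simp add: monoid_choice_def)
next
  case (snoc x u)
  then show ?case using assms(1) unfolding monoid_choice_def by auto
qed

lemma semigroup_fold:
  assumes "semigroup_choice X \<tau>" "u \<in> lists X"
  shows "foldl (\<lambda>a x. mult1 a (sigma1 \<tau> [x])) None u = sigma1 \<tau> u"
  using assms(2)
proof (induction u rule: rev_induct)
  case Nil then show ?case by (simp add: sigma1_def)
next
  case (snoc x u)
  then show ?case using assms(1) unfolding semigroup_choice_def sigma1_def by auto
qed

theorem theorem6p1:
  shows "(\<forall>(X::'x set) (\<sigma>::'x list \<Rightarrow> 'm::monoid_mult). finite X \<and> monoid_choice X \<sigma> \<longrightarrow>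
            (finite (UNIV::'m set) \<longleftrightarrow> regular_lang (hat X) (monoid_loop_problem X \<sigma>)))
       \<and> (\<forall>(Y::'y set) (\<tau>::'y list \<Rightarrow> 's::semigroup_mult). finite Y \<and> semigroup_choice Y \<tau> \<longrightarrow>
            (finite (UNIV::'s set) \<longleftrightarrow> regular_lang (hat Y) (semigroup_loop_problem Y \<tau>)))"
proof (intro conjI allI impI)
  fix X :: "'x set" and \<sigma> :: "'x list \<Rightarrow> 'm"
  assume a: "finite X \<and> monoid_choice X \<sigma>"
  have s: "(\<lambda>u. foldl (\<lambda>a x. a * \<sigma> [x]) 1 u) ` lists X = UNIV"
    using a monoid_fold[of X \<sigma>] unfolding monoid_choice_def
    by (metis (no_types, lifting) image_cong)
  show "finite (UNIV::'m set) \<longleftrightarrow> regular_lang (hat X) (monoid_loop_problem X \<sigma>)"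
    unfolding monoid_loop_problem_def
    using finite_regular[where 'v='m] regular_finite[OF _ s] by (intro iffI) auto
next
  fix Y :: "'y set" and \<tau> :: "'y list \<Rightarrow> 's"
  assume a: "finite Y \<and> semigroup_choice Y \<tau>"
  have s: "(\<lambda>u. foldl (\<lambda>a x. mult1 a (sigma1 \<tau> [x])) None u) ` lists Y = UNIV"
  proof -
    have "(\<lambda>u. foldl (\<lambda>a x. mult1 a (sigma1 \<tau> [x])) None u) ` lists Y = sigma1 \<tau> ` lists Y"
      using semigroup_fold[of Y \<tau>] a by (auto intro!: image_cong)
    also have "\<dots> = UNIV"
    proof (rule set_eqI, rule iffI)
      fix z :: "'s option"
      show "z \<in> sigma1 \<tau> ` lists Y"
      proof (cases z)
        case None then show ?thesis by (auto simp: sigma1_def image_iff intro!: bexI[of _ "[]"])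
      next
        case (Some s)
        then obtain u where "u \<in> lists Y - {[]}" "\<tau> u = s"
          using a unfolding semigroup_choice_def by (metis UNIV_I imageE)
        then show ?thesis using Some by (auto simp: sigma1_def image_iff)
      qed
    qed simp
    finally show ?thesis .
  qed
  have "finite (UNIV::'s set) \<longleftrightarrow> finite (UNIV::'s option set)" by simp
  then show "finite (UNIV::'s set) \<longleftrightarrow> regular_lang (hat Y) (semigroup_loop_problem Y \<tau>)"
    unfolding semigroup_loop_problem_def
    using finite_regular[where 'v="'s option"] regular_finite[OF _ s] by (intro iffI) auto
qed

end
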